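(* Let $n\ge2$ and $k\ge 3$ be integers, $x>0$ and $\alpha_1,\dots,\alpha_{k-2}\in\mathbb{R}$. Then $\det A_{n;k}(x,x^{\alpha_1},\dots,x^{\alpha_{k-2}})=\det A_{n;k}(x,x^{1-\alpha_{k-2}},\dots,x^{1-\alpha_1})$.
   Context: For an integer $n\ge 2$ and $y\ge0$, $y\neq 1$, let $k_n(y)=\frac1n\sum_{l=1}^{n}\frac{1-y\cos(2\pi l/n)}{(1+y^2-2y\cos(2\pi l/n))^{3/2}}-1$, and set $k_n(1)=\delta_n:=\frac{1}{4n}\sum_{l=1}^{n-1}\frac{1}{\sin(\pi l/n)}-1$. For $x_1,\dots,x_{k-1}>0$ and $x_k:=1$, $A_{n;k}(x_1,\dots,x_{k-1})$ is the $k\times k$ matrix whose $(i,j)$ entry is $k_n(x_j/x_i)$ (so diagonal entries equal $\delta_n$). *)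

theory Defs
  imports Complex_Main "Jordan_Normal_Form.Determinant"
begin

definition delta_n :: "nat \<Rightarrow> real" where
  "delta_n n = (1 / (4 * real n)) * (\<Sum>l=1..n-1. 1 / sin (pi * real l / real n)) - 1"

definition k_n :: "nat \<Rightarrow> real \<Rightarrow> real" where
  "k_n n y = (if y = 1 then delta_n n else
     (1 / real n) * (\<Sum>l=1..n.
        (1 - y * cos (2 * pi * real l / real n)) /
        (1 + y^2 - 2 * y * cos (2 * pi * real l / real n)) powr (3/2)) - 1)"

text \<open>A_{n;k}(x_1,...,x_{k-1}) where xs = [x_1,...,x_{k-1}], k = length xs + 1, x_k = 1.
  Indices are 0-based: entry (i,j) is k_n(x_{j+1}/x_{i+1}).\<close>
definition A_mat :: "nat \<Rightarrow> real list \<Rightarrow> real mat" where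
  "A_mat n xs = (let ys = xs @ [1]; k = length ys in
     mat k k (\<lambda>(i,j). k_n n (ys ! j / ys ! i)))"

end

theory Submission
  imports Defs
begin

lemma det_permute_both:
  fixes A :: "'a :: comm_ring_1 mat"
  assumes A: "A \<in> carrier_mat n n" and p: "p permutes {0 ..< n}"
  shows "det (mat n n (\<lambda>(i,j). A $$ (p i, p j))) = det A"
proof -
  define A' where "A' = mat n n (\<lambda>(i,j). A $$ (i, p j))"
  have A'c: "A' \<in> carrier_mat n n" unfolding A'_def by simp
  have pi: "\<And>i. i < n \<Longrightarrow> p i < n" using p by (meson atLeastLessThan_iff permutes_in_image zero_le)
  have e1: "mat n n (\<lambda>(i,j). A $$ (p i, p j)) = mat n n (\<lambda>(i,j). A' $$ (p i, j))"
    unfolding A'_def by (rule eq_matI) (auto simp: pi)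
  have e2: "transpose_mat A' = mat n n (\<lambda>(i,j). (transpose_mat A) $$ (p i, j))"
    unfolding A'_def using A by (intro eq_matI) (auto simp: pi)
  have "det A' = det (transpose_mat A')" using det_transpose[OF A'c] by simp
  also have "\<dots> = signof p * det (transpose_mat A)" unfolding e2
    by (rule det_permute_rows[OF _ p]) (use A in simp)
  also have "\<dots> = signof p * det A" using det_transpose[OF A] by simp
  finally have d': "det A' = signof p * det A" .
  have "det (mat n n (\<lambda>(i,j). A $$ (p i, p j))) = signof p * det A'"
    unfolding e1 by (rule det_permute_rows[OF A'c p])
  also have "\<dots> = (signof p * signof p) * det A" using d' by (simp add: ac_simps)
  also have "signof p * signof p = (1::'a)" by (simp add: sign_def)
  finally show ?thesis by simp
qed

lemma nth_ys:
  assumes "j < k" "k \<ge> 2"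
  shows "((x # map f [1..<k-1]) @ [1]) ! j = (if j = 0 then x else if j < k-1 then f j else 1)"
proof (cases j)
  case 0 then show ?thesis by simp
next
  case (Suc m)
  then show ?thesis using assms by (auto simp: nth_append)
qed

theorem lemma6:
  fixes n k :: nat and x :: real and alpha :: "nat \<Rightarrow> real"
  assumes "n \<ge> 2" and "k \<ge> 3" and "x > 0"
  shows "det (A_mat n (x # map (\<lambda>m. x powr alpha m) [1..<k-1]))
       = det (A_mat n (x # map (\<lambda>m. x powr (1 - alpha (k - 1 - m))) [1..<k-1]))"
proof -
  define ys where "ys = (x # map (\<lambda>m. x powr alpha m) [1..<k-1]) @ [1]"
  define zs where "zs = (x # map (\<lambda>m. x powr (1 - alpha (k - 1 - m))) [1..<k-1]) @ [1]"
  have ly: "length ys = k" and lz: "length zs = k" using assms unfolding ys_def zs_def by auto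
  define r where "r = (\<lambda>i::nat. if i < k then k - 1 - i else i)"
  have rp: "r permutes {0..<k}"
  proof -
    have "bij_betw r {0..<k} {0..<k}"
      unfolding r_def using assms
      by (intro bij_betw_byWitness[where f' = "\<lambda>i. k - 1 - i"]) auto
    then show ?thesis
      by (rule bij_imp_permutes) (auto simp: r_def)
  qed
  have ypos: "\<And>j. j < k \<Longrightarrow> ys ! j > 0"
    unfolding ys_def using assms by (subst nth_ys) auto
  have zy: "\<And>i. i < k \<Longrightarrow> zs ! i = x / ys ! (r i)"
  proof -
    fix i assume i: "i < k"
    show "zs ! i = x / ys ! (r i)"
      unfolding zs_def ys_def r_def using assms i
      by (subst nth_ys, simp, simp)+ (auto simp: powr_diff)
  qed
  define A where "A = A_mat n (x # map (\<lambda>m. x powr alpha m) [1..<k-1])"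
  have A: "A = mat k k (\<lambda>(i,j). k_n n (ys ! j / ys ! i))"
    unfolding A_def A_mat_def ys_def[symmetric] Let_def ly by simp
  have Ac: "A \<in> carrier_mat k k" unfolding A by simp
  have ri: "\<And>i. i < k \<Longrightarrow> r i < k" unfolding r_def using assms by auto
  have B: "A_mat n (x # map (\<lambda>m. x powr (1 - alpha (k - 1 - m))) [1..<k-1])
     = mat k k (\<lambda>(i,j). (transpose_mat A) $$ (r i, r j))"
    unfolding A_mat_def zs_def[symmetric] Let_def lz
  proof (rule eq_matI)
    fix i j assume i: "i < dim_row (mat k k (\<lambda>(i,j). (transpose_mat A) $$ (r i, r j)))"
      and j: "j < dim_col (mat k k (\<lambda>(i,j). (transpose_mat A) $$ (r i, r j)))"
    then have i: "i < k" and j: "j < k" by auto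
    have "zs ! j / zs ! i = ys ! (r i) / ys ! (r j)"
      using zy[OF i] zy[OF j] ypos[OF ri[OF i]] ypos[OF ri[OF j]] assms(3) by simp
    then show "mat k k (\<lambda>(i, j). k_n n (zs ! j / zs ! i)) $$ (i, j) =
         mat k k (\<lambda>(i, j). transpose_mat A $$ (r i, r j)) $$ (i, j)"
      using i j ri[OF i] ri[OF j] by (simp add: A)
  qed auto
  show ?thesis
    unfolding A_def[symmetric] B
    using det_permute_both[OF iffD2[OF transpose_carrier_mat Ac] rp] det_transpose[OF Ac] by simp
qed

end
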